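(* Let $\ell$ be a prime, $\nu\ge 1$, and $R$ a $\mathbb{Z}/\ell^\nu$-algebra. Let $L$ be the free $R$-module on symbols $\alpha_1,\dots,\alpha_{\ell-1}$, and for $k\ge0$ let $\phi_k:L\to H_R$ be the $R$-linear map with $\phi_k(\alpha_i)=\alpha_{k\ell+i}$. Then $\bigoplus_k\phi_k:\bigoplus_{k=0}^\infty L\to H_R$ is an isomorphism of $R$-modules. In particular, the elements $\alpha_n$ with $n>0$ and $n\not\equiv0\pmod\ell$ form an $R$-basis of $H_R$.
   Context: $F\subseteq\mathbb{Q}[t]$ is the ring of numerical polynomials (those $f$ with $f(n)\in\mathbb{Z}$ for all integers $n\gg0$), free abelian on $\alpha_n=\binom tn$, $n\ge0$. $F_R=R\otimes F$ is the free $R$-module on the $\alpha_n$, and $T:F_R\to F_R$ (multiplication by $t$) is given by $T(\alpha_n)=n\alpha_n+(n+1)\alpha_{n+1}$. $H_R$ denotes the colimit of $F_R\xrightarrow{T}F_R\xrightarrow{T}F_R\to\cdots$, i.e. $H_R=F_R[1/t]=R\otimes H$ with $H=F[1/t]$; $\alpha_n$ also denotes the image in $H_R$ of the basis element $\alpha_n$ of the first copy of $F_R$. *)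

theory Defs
  imports Main "HOL-Computational_Algebra.Primes"
begin

text \<open>Elements of F_R are represented by their coefficient sequences with respect
  to the basis alpha_n = (t choose n): finitely supported functions nat => R.\<close>

definition FR :: "(nat \<Rightarrow> 'a::comm_ring_1) set" where
  "FR = {f. finite {n. f n \<noteq> 0}}"

text \<open>Multiplication by t: T(alpha_n) = n alpha_n + (n+1) alpha_(n+1),
  so the coefficient of alpha_n in T f is n f(n) + n f(n-1).\<close>

definition Tmap :: "(nat \<Rightarrow> 'a::comm_ring_1) \<Rightarrow> nat \<Rightarrow> 'a" where
  "Tmap f n = of_nat n * f n + (if n = 0 then 0 else of_nat n * f (n - 1))"

text \<open>The colimit H_R of F_R --T--> F_R --T--> ... : an element is represented by
  a pair (k, f) meaning f in the k-th copy; (k,f) ~ (j,g) iff they agree after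
  pushing both forward to some common later copy.\<close>

definition colim_rel :: "((nat \<times> (nat \<Rightarrow> 'a::comm_ring_1)) \<times> (nat \<times> (nat \<Rightarrow> 'a))) set" where
  "colim_rel = {((k, f), (j, g)). f \<in> FR \<and> g \<in> FR \<and>
      (\<exists>m. k \<le> m \<and> j \<le> m \<and> (Tmap ^^ (m - k)) f = (Tmap ^^ (m - j)) g)}"

definition HR :: "(nat \<times> (nat \<Rightarrow> 'a::comm_ring_1)) set set" where
  "HR = (UNIV \<times> FR) // colim_rel"

definition hclass :: "nat \<Rightarrow> (nat \<Rightarrow> 'a::comm_ring_1) \<Rightarrow> (nat \<times> (nat \<Rightarrow> 'a)) set" where
  "hclass k f = colim_rel `` {(k, f)}"

definition hadd :: "(nat \<times> (nat \<Rightarrow> 'a::comm_ring_1)) set \<Rightarrow> (nat \<times> (nat \<Rightarrow> 'a)) set \<Rightarrow> (nat \<times> (nat \<Rightarrow> 'a)) set" where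
  "hadd X Y = \<Union>{hclass (max k j) (\<lambda>n. (Tmap ^^ (max k j - k)) f n + (Tmap ^^ (max k j - j)) g n)
      | k f j g. (k, f) \<in> X \<and> (j, g) \<in> Y}"

definition hscale :: "'a::comm_ring_1 \<Rightarrow> (nat \<times> (nat \<Rightarrow> 'a)) set \<Rightarrow> (nat \<times> (nat \<Rightarrow> 'a)) set" where
  "hscale r X = \<Union>{hclass k (\<lambda>n. r * f n) | k f. (k, f) \<in> X}"

definition Lmod :: "nat \<Rightarrow> (nat \<Rightarrow> 'a::comm_ring_1) set" where
  "Lmod l = {v. \<forall>i. v i \<noteq> 0 \<longrightarrow> 1 \<le> i \<and> i \<le> l - 1}"

text \<open>phi_k(alpha_i) = alpha_(k l + i), first on the level of F_R, then into H_R
  via the structure map of the first copy.\<close>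

definition phiF :: "nat \<Rightarrow> nat \<Rightarrow> (nat \<Rightarrow> 'a::comm_ring_1) \<Rightarrow> nat \<Rightarrow> 'a" where
  "phiF l k v n = (if k * l < n \<and> n < (k + 1) * l then v (n - k * l) else 0)"

definition phi :: "nat \<Rightarrow> nat \<Rightarrow> (nat \<Rightarrow> 'a::comm_ring_1) \<Rightarrow> (nat \<times> (nat \<Rightarrow> 'a)) set" where
  "phi l k v = hclass 0 (phiF l k v)"

definition DSum :: "nat \<Rightarrow> (nat \<Rightarrow> nat \<Rightarrow> 'a::comm_ring_1) set" where
  "DSum l = {c. (\<forall>k. c k \<in> Lmod l) \<and> finite {k. c k \<noteq> (\<lambda>_. 0)}}"

definition Phi :: "nat \<Rightarrow> (nat \<Rightarrow> nat \<Rightarrow> 'a::comm_ring_1) \<Rightarrow> (nat \<times> (nat \<Rightarrow> 'a)) set" where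
  "Phi l c = hclass 0 (\<lambda>n. \<Sum>k\<in>{k. c k \<noteq> (\<lambda>_. 0)}. phiF l k (c k) n)"

end

theory Submission
  imports Defs "HOL-Computational_Algebra.Primes"
begin


lemma Tmap_add: "Tmap (\<lambda>n. f n + g n) = (\<lambda>n. Tmap f n + Tmap g n)"
  by (auto simp: Tmap_def fun_eq_iff algebra_simps)
lemma Tmap_scale: "Tmap (\<lambda>n. r * f n) = (\<lambda>n. r * Tmap f n)"
  by (auto simp: Tmap_def fun_eq_iff algebra_simps)
lemma Tmap_zero: "Tmap (\<lambda>n. 0) = (\<lambda>n. 0)" by (simp add: Tmap_def fun_eq_iff)
lemma Tpow_add: "(Tmap^^m) (\<lambda>n. f n + g n) = (\<lambda>n. (Tmap^^m) f n + (Tmap^^m) g n)"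
  by (induction m) (simp_all add: Tmap_add)
lemma Tpow_scale: "(Tmap^^m) (\<lambda>n. r * f n) = (\<lambda>n. r * (Tmap^^m) f n)"
  by (induction m) (simp_all add: Tmap_scale)
lemma Tpow_zero: "(Tmap^^m) (\<lambda>n. 0) = (\<lambda>n. 0)"
  by (induction m) (simp_all add: Tmap_zero)
lemma Tmap_diff: "Tmap (\<lambda>n. f n - g n) = (\<lambda>n. Tmap f n - Tmap g n)"
  by (auto simp: Tmap_def fun_eq_iff algebra_simps)
lemma Tpow_diff: "(Tmap^^m) (\<lambda>n. f n - g n) = (\<lambda>n. (Tmap^^m) f n - (Tmap^^m) g n)"
  by (induction m) (simp_all add: Tmap_diff)
lemma Tpow_comp: "(Tmap^^a) ((Tmap^^b) f) = (Tmap^^(a+b)) f" by (simp add: funpow_add)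
lemma Tpow_split: assumes "k \<le> m1" "m1 \<le> m"
  shows "(Tmap^^(m-k)) f = (Tmap^^(m-m1)) ((Tmap^^(m1-k)) f)"
proof -
  have "m - k = (m-m1)+(m1-k)" using assms by arith
  then show ?thesis by (simp only: Tpow_comp)
qed

lemma Tmap_FR: assumes "f \<in> FR" shows "Tmap f \<in> FR"
proof -
  have "{n. Tmap f n \<noteq> 0} \<subseteq> {n. f n \<noteq> 0} \<union> Suc ` {n. f n \<noteq> 0}"
  proof
    fix n assume "n \<in> {n. Tmap f n \<noteq> 0}"
    then have "f n \<noteq> 0 \<or> (n \<noteq> 0 \<and> f (n-1) \<noteq> 0)" by (auto simp: Tmap_def split: if_splits)
    then show "n \<in> {n. f n \<noteq> 0} \<union> Suc ` {n. f n \<noteq> 0}" by (cases n) auto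
  qed
  then show ?thesis using assms unfolding FR_def by (auto intro: finite_subset)
qed
lemma Tpow_FR: "f \<in> FR \<Longrightarrow> (Tmap^^m) f \<in> FR" by (induction m) (auto intro: Tmap_FR)
lemma FR_add: "f \<in> FR \<Longrightarrow> g \<in> FR \<Longrightarrow> (\<lambda>n. f n + g n) \<in> FR"
proof -
  assume a: "f \<in> FR" "g \<in> FR"
  have "{n. f n + g n \<noteq> 0} \<subseteq> {n. f n \<noteq> 0} \<union> {n. g n \<noteq> 0}" by auto
  then show ?thesis using a unfolding FR_def by (auto intro: finite_subset)
qed
lemma FR_scale: "f \<in> FR \<Longrightarrow> (\<lambda>n. r * f n) \<in> FR"
proof -
  assume a: "f \<in> FR"
  have "{n. r * f n \<noteq> 0} \<subseteq> {n. f n \<noteq> 0}" by auto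
  then show ?thesis using a unfolding FR_def by (auto intro: finite_subset)
qed
lemma FR_zero: "(\<lambda>n. 0) \<in> FR" by (simp add: FR_def)

lemma equiv_colim: "equiv (UNIV \<times> FR) (colim_rel :: ((nat \<times> (nat \<Rightarrow> 'a::comm_ring_1)) \<times> _) set)"
proof (rule equivI)
  show "colim_rel \<subseteq> (UNIV \<times> FR) \<times> (UNIV \<times> (FR :: (nat \<Rightarrow> 'a) set))"
    by (auto simp: colim_rel_def)
  show "refl_on (UNIV \<times> FR) (colim_rel :: ((nat \<times> (nat \<Rightarrow> 'a::comm_ring_1)) \<times> _) set)"
    unfolding refl_on_def colim_rel_def by auto
  show "sym (colim_rel :: ((nat \<times> (nat \<Rightarrow> 'a::comm_ring_1)) \<times> _) set)"
    unfolding sym_def colim_rel_def by auto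
  show "trans (colim_rel :: ((nat \<times> (nat \<Rightarrow> 'a::comm_ring_1)) \<times> _) set)"
    unfolding trans_def
  proof (intro allI impI)
    fix x y z :: "nat \<times> (nat \<Rightarrow> 'a)"
    assume xy: "(x, y) \<in> colim_rel" and yz: "(y, z) \<in> colim_rel"
    obtain k f where x: "x = (k,f)" by (cases x)
    obtain j g where y: "y = (j,g)" by (cases y)
    obtain i h where z: "z = (i,h)" by (cases z)
    from xy obtain m1 where m1: "k \<le> m1" "j \<le> m1" "(Tmap ^^ (m1 - k)) f = (Tmap ^^ (m1 - j)) g"
      and fg: "f \<in> FR" "g \<in> FR" unfolding x y colim_rel_def by auto
    from yz obtain m2 where m2: "j \<le> m2" "i \<le> m2" "(Tmap ^^ (m2 - j)) g = (Tmap ^^ (m2 - i)) h"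
      and h: "h \<in> FR" unfolding y z colim_rel_def by auto
    define m where "m = m1 + m2"
    have "(Tmap ^^ (m - k)) f = (Tmap^^(m-m1)) ((Tmap ^^ (m1 - k)) f)"
      using m1 by (intro Tpow_split) (auto simp: m_def)
    also have "\<dots> = (Tmap^^(m-m1)) ((Tmap ^^ (m1 - j)) g)" using m1 by simp
    also have "\<dots> = (Tmap ^^ (m - j)) g"
      using m1 by (intro Tpow_split[symmetric]) (auto simp: m_def)
    also have "\<dots> = (Tmap^^(m-m2)) ((Tmap ^^ (m2 - j)) g)"
      using m2 by (intro Tpow_split) (auto simp: m_def)
    also have "\<dots> = (Tmap^^(m-m2)) ((Tmap ^^ (m2 - i)) h)" using m2 by simp
    also have "\<dots> = (Tmap ^^ (m - i)) h"
      using m2 by (intro Tpow_split[symmetric]) (auto simp: m_def)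
    finally have "(Tmap ^^ (m - k)) f = (Tmap ^^ (m - i)) h" .
    moreover have "k \<le> m" "i \<le> m" using m1 m2 by (auto simp: m_def)
    ultimately show "(x, z) \<in> colim_rel" unfolding x z colim_rel_def using fg h by auto
  qed
qed

lemma unit_exists:
  assumes "prime l" "(of_nat (l ^ \<nu>) :: 'a::comm_ring_1) = 0" "\<not> l dvd n"
  shows "\<exists>u::'a. u * of_nat n = 1"
proof -
  have "coprime l n" using assms by (simp add: prime_imp_coprime)
  then have "coprime (l^\<nu>) n" by simp
  then have "coprime (int n) (int (l^\<nu>))" by (simp add: coprime_commute)
  then have g: "gcd (int n) (int (l^\<nu>)) = 1" by simp
  obtain u v where "u * int n + v * int (l^\<nu>) = gcd (int n) (int (l^\<nu>))" using bezout_int by blast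
  then have "u * int n + v * int (l^\<nu>) = 1" using g by simp
  then have "(of_int (u * int n + v * int (l^\<nu>)) :: 'a) = 1" by simp
  then have "of_int u * of_nat n + of_int v * (of_nat (l^\<nu>) :: 'a) = 1" by simp
  then show ?thesis using assms(2) by auto
qed

definition uinv :: "nat \<Rightarrow> 'a::comm_ring_1" where "uinv n = (SOME u. u * of_nat n = 1)"

lemma uinv:
  assumes "prime l" "(of_nat (l ^ \<nu>) :: 'a::comm_ring_1) = 0" "\<not> l dvd n"
  shows "(uinv n :: 'a) * of_nat n = 1"
  unfolding uinv_def using someI_ex[OF unit_exists[OF assms]] .



definition Vset :: "nat \<Rightarrow> (nat \<Rightarrow> 'a::comm_ring_1) set" where
  "Vset l = {a. finite {n. a n \<noteq> 0} \<and> (\<forall>n. a n \<noteq> 0 \<longrightarrow> 0 < n \<and> \<not> l dvd n)}"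

fun solA :: "nat \<Rightarrow> (nat \<Rightarrow> 'a::comm_ring_1) \<Rightarrow> nat \<Rightarrow> 'a" where
  "solA l v 0 = 0"
| "solA l v (Suc n) = (if l dvd Suc n then 0 else uinv (Suc n) * v (Suc n) - solA l v n)"

lemma Tmap_pos: "0 < n \<Longrightarrow> Tmap f n = of_nat n * f n + of_nat n * f (n - 1)"
  by (simp add: Tmap_def)

lemma Vset_FR: "a \<in> Vset l \<Longrightarrow> a \<in> FR" by (simp add: Vset_def FR_def)

context
  fixes l \<nu> :: nat
  assumes lp: "prime l" and l0: "(of_nat (l ^ \<nu>) :: 'a::comm_ring_1) = 0"
begin

lemma l2: "2 \<le> l" using lp by (simp add: prime_ge_2_nat)

lemma uinv': "\<not> l dvd n \<Longrightarrow> of_nat n * (uinv n :: 'a) = 1"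
  using uinv[OF lp l0] by (simp add: mult.commute)

lemma solA_dvd: "l dvd n \<Longrightarrow> solA l (v::nat\<Rightarrow>'a) n = 0" by (cases n) auto

lemma solA_pos: "0 < n \<Longrightarrow> solA l (v::nat\<Rightarrow>'a) n = (if l dvd n then 0 else uinv n * v n - solA l v (n-1))"
  by (cases n) auto

lemma solA_supp: "solA l (v::nat\<Rightarrow>'a) n \<noteq> 0 \<Longrightarrow> 0 < n \<and> \<not> l dvd n"
  by (cases n) (auto simp: solA_dvd)

lemma Tmap_solA: "Tmap (solA l (v::nat\<Rightarrow>'a)) n = (if l dvd n then of_nat n * solA l v (n-1) else v n)"
proof (cases "n = 0")
  case True then show ?thesis by (simp add: Tmap_def)
next
  case False
  then have n: "0 < n" by simp
  show ?thesis
  proof (cases "l dvd n")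
    case True then show ?thesis using n by (simp add: Tmap_pos solA_dvd)
  next
    case nd: False
    have "Tmap (solA l v) n = of_nat n * (uinv n * v n - solA l v (n-1)) + of_nat n * solA l v (n-1)"
      using n nd by (simp add: Tmap_pos solA_pos)
    also have "\<dots> = (of_nat n * uinv n) * v n" by (simp add: algebra_simps)
    also have "\<dots> = v n" using uinv'[OF nd] by simp
    finally show ?thesis using nd by simp
  qed
qed

lemma solA_fin:
  assumes "(v::nat\<Rightarrow>'a) \<in> Vset l"
  shows "finite {n. solA l v n \<noteq> 0}"
proof -
  have "finite {n. v n \<noteq> 0}" using assms by (simp add: Vset_def)
  then obtain K where K: "\<And>n. v n \<noteq> 0 \<Longrightarrow> n < K" by (auto simp: finite_nat_set_iff_bounded)
  have lK: "K \<le> l * K" using l2 by simp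
  have z: "solA l v (l*K + d) = 0" for d
  proof (induction d)
    case 0 then show ?case by (simp add: solA_dvd)
  next
    case (Suc d)
    have "v (Suc (l*K + d)) = 0"
    proof (rule ccontr)
      assume "v (Suc (l*K + d)) \<noteq> 0"
      then have "Suc (l*K+d) < K" by (rule K)
      with lK show False by linarith
    qed
    then show ?case using Suc by simp
  qed
  have "{n. solA l v n \<noteq> 0} \<subseteq> {..<l*K}"
  proof
    fix n assume "n \<in> {n. solA l v n \<noteq> 0}"
    then have "solA l v n \<noteq> 0" by simp
    show "n \<in> {..<l*K}"
    proof (rule ccontr)
      assume "n \<notin> {..<l*K}"
      then have "n = l*K + (n - l*K)" by simp
      then have "solA l v n = 0" using z by metis
      then show False using \<open>solA l v n \<noteq> 0\<close> by simp
    qed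
  qed
  then show ?thesis by (rule finite_subset) simp
qed

lemma claimA:
  assumes v: "(v::nat\<Rightarrow>'a) \<in> Vset l"
  shows "\<exists>a\<in>Vset l. \<exists>w\<in>FR. v = (\<lambda>n. Tmap a n + of_nat l * w n)"
proof -
  define a where "a = solA l v"
  define w where "w = (\<lambda>n. if l dvd n then - (of_nat (n div l) * a (n-1)) else (0::'a))"
  have aV: "a \<in> Vset l" unfolding Vset_def a_def using solA_fin[OF v] solA_supp by auto
  have "{n. w n \<noteq> 0} \<subseteq> Suc ` {n. a n \<noteq> 0}"
  proof
    fix n assume "n \<in> {n. w n \<noteq> 0}"
    then have "n \<noteq> 0" "a (n-1) \<noteq> 0" by (cases "n=0", auto simp: w_def split: if_splits)+
    then show "n \<in> Suc ` {n. a n \<noteq> 0}" by (cases n) auto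
  qed
  then have wF: "w \<in> FR" using aV unfolding FR_def Vset_def by (auto intro: finite_subset)
  have "v n = Tmap a n + of_nat l * w n" for n
  proof (cases "l dvd n")
    case True
    then have "v n = 0" using v by (auto simp: Vset_def)
    moreover have "(of_nat n :: 'a) = of_nat l * of_nat (n div l)"
      using True by (metis dvd_mult_div_cancel of_nat_mult)
    ultimately show ?thesis using True by (simp add: a_def w_def Tmap_solA)
  next
    case False then show ?thesis by (simp add: a_def w_def Tmap_solA)
  qed
  then show ?thesis using aV wF by (auto simp: fun_eq_iff)
qed

end


context
  fixes l \<nu> :: nat
  assumes lp: "prime l" and l0: "(of_nat (l ^ \<nu>) :: 'a::comm_ring_1) = 0"
begin

lemma dvd_not_pred: "l dvd n \<Longrightarrow> n \<noteq> 0 \<Longrightarrow> \<not> l dvd (n - 1)"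
proof
  assume "l dvd n" "n \<noteq> 0" "l dvd (n - 1)"
  then have "l dvd n - (n - 1)" using dvd_diff_nat by blast
  moreover have "n - (n - 1) = 1" using \<open>n \<noteq> 0\<close> by simp
  ultimately have "l dvd 1" by simp
  then show False using l2[OF lp l0] by simp
qed

lemma D0:
  assumes g: "(g::nat\<Rightarrow>'a) \<in> FR"
  shows "\<exists>a\<in>Vset l. \<exists>h\<in>FR. Tmap g = (\<lambda>n. Tmap a n + of_nat l * h n)"
proof -
  define gV where "gV = (\<lambda>n. if l dvd n then 0 else g n)"
  define v where "v = (\<lambda>n. if \<not> l dvd n \<and> l dvd (n - 1) then of_nat n * g (n - 1) else (0::'a))"
  define w0 where "w0 = (\<lambda>n. if l dvd n then of_nat (n div l) * g n else (0::'a))"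
  have gfin: "finite {n. g n \<noteq> 0}" using g by (simp add: FR_def)
  have nz: "\<not> l dvd n \<Longrightarrow> 0 < n" for n by (cases n) auto
  have "{n. v n \<noteq> 0} \<subseteq> Suc ` {n. g n \<noteq> 0}"
  proof
    fix n assume "n \<in> {n. v n \<noteq> 0}"
    then have "n \<noteq> 0" "g (n-1) \<noteq> 0" by (cases "n=0", auto simp: v_def split: if_splits)+
    then show "n \<in> Suc ` {n. g n \<noteq> 0}" by (cases n) auto
  qed
  then have vV: "v \<in> Vset l" using gfin nz unfolding Vset_def
    by (auto intro: finite_subset simp: v_def split: if_splits)
  obtain a' w where a': "a' \<in> Vset l" and w: "w \<in> FR" and vd: "v = (\<lambda>n. Tmap a' n + of_nat l * w n)"
    using claimA[OF lp l0 vV] by blast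
  have "{n. gV n \<noteq> 0} \<subseteq> {n. g n \<noteq> 0}" by (auto simp: gV_def)
  then have gVV: "gV \<in> Vset l" using gfin nz unfolding Vset_def
    by (auto intro: finite_subset simp: gV_def split: if_splits)
  have "{n. w0 n \<noteq> 0} \<subseteq> {n. g n \<noteq> 0}" by (auto simp: w0_def)
  then have w0F: "w0 \<in> FR" using gfin unfolding FR_def by (auto intro: finite_subset)
  have key: "Tmap g n = Tmap gV n + v n + of_nat l * w0 n" for n
  proof (cases "n = 0")
    case True then show ?thesis by (simp add: Tmap_def gV_def v_def w0_def)
  next
    case False
    then have n: "0 < n" by simp
    show ?thesis
    proof (cases "l dvd n")
      case True
      have "(of_nat n :: 'a) = of_nat l * of_nat (n div l)"
        using True by (metis dvd_mult_div_cancel of_nat_mult)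
      then show ?thesis using True n dvd_not_pred[OF True] by (simp add: Tmap_pos gV_def v_def w0_def)
    next
      case False
      then show ?thesis using n by (simp add: Tmap_pos gV_def v_def w0_def)
    qed
  qed
  define a where "a = (\<lambda>n. gV n + a' n)"
  define h where "h = (\<lambda>n. w n + w0 n)"
  have aV: "a \<in> Vset l"
  proof -
    have "{n. a n \<noteq> 0} \<subseteq> {n. gV n \<noteq> 0} \<union> {n. a' n \<noteq> 0}" by (auto simp: a_def)
    then show ?thesis using gVV a' unfolding Vset_def a_def by (auto intro: finite_subset)
  qed
  have hF: "h \<in> FR" unfolding h_def using w w0F by (rule FR_add)
  have "Tmap g = (\<lambda>n. Tmap a n + of_nat l * h n)"
    unfolding a_def h_def Tmap_add fun_eq_iff key using vd by (simp add: algebra_simps fun_eq_iff)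
  then show ?thesis using aV hF by blast
qed

lemma Dlem:
  assumes g: "(g::nat\<Rightarrow>'a) \<in> FR"
  shows "\<exists>N\<ge>j. \<exists>a\<in>Vset l. \<exists>h\<in>FR. (Tmap^^(N-j)) g = (\<lambda>n. (Tmap^^N) a n + of_nat l * h n)"
proof (induction j)
  case 0
  obtain a h where "a\<in>Vset l" "h\<in>FR" "Tmap g = (\<lambda>n. Tmap a n + of_nat l * h n)"
    using D0[OF g] by blast
  then show ?case by (intro exI[of _ 1]) auto
next
  case (Suc j)
  then obtain N a h where N: "N \<ge> j" and a: "a\<in>Vset l" and h: "h \<in> FR"
    and e: "(Tmap^^(N-j)) g = (\<lambda>n. (Tmap^^N) a n + of_nat l * h n)" by blast
  obtain a' w where a': "a' \<in> Vset l" and w: "w \<in> FR" and ad: "a = (\<lambda>n. Tmap a' n + of_nat l * w n)"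
    using claimA[OF lp l0 a] by blast
  have "(Tmap^^(Suc N - Suc j)) g = (Tmap^^(N-j)) g" by simp
  also have "\<dots> = (\<lambda>n. (Tmap^^N) (Tmap a') n + of_nat l * ((Tmap^^N) w n + h n))"
    unfolding e ad Tpow_add Tpow_scale by (simp add: algebra_simps)
  also have "(Tmap^^N) (Tmap a') = (Tmap^^(Suc N)) a'" by (metis comp_apply funpow_Suc_right)
  finally have "(Tmap^^(Suc N - Suc j)) g = (\<lambda>n. (Tmap^^(Suc N)) a' n + of_nat l * ((Tmap^^N) w n + h n))" .
  moreover have "(\<lambda>n. (Tmap^^N) w n + h n) \<in> FR" using w h by (intro FR_add Tpow_FR)
  ultimately show ?case using N a' by (intro exI[of _ "Suc N"]) auto
qed

lemma Qlem:
  assumes g: "(g::nat\<Rightarrow>'a) \<in> FR"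
  shows "\<exists>N\<ge>j. \<exists>a\<in>Vset l. (Tmap^^(N-j)) g = (Tmap^^N) a"
proof -
  define P where "P e \<longleftrightarrow> (\<forall>j (g::nat\<Rightarrow>'a). g \<in> FR \<longrightarrow>
      (\<exists>N\<ge>j. \<exists>a\<in>Vset l. (Tmap^^(N-j)) (\<lambda>n. of_nat l ^ e * g n) = (Tmap^^N) a))" for e
  have base: "P \<nu>"
    unfolding P_def
  proof (intro allI impI)
    fix j and g :: "nat \<Rightarrow> 'a"
    have z: "(of_nat l ^ \<nu> :: 'a) = 0" using l0 by (simp add: of_nat_power)
    have zV: "(\<lambda>n. 0::'a) \<in> Vset l" by (simp add: Vset_def)
    show "\<exists>N\<ge>j. \<exists>a\<in>Vset l. (Tmap^^(N-j)) (\<lambda>n. of_nat l ^ \<nu> * g n) = (Tmap^^N) a"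
      using zV by (intro exI[of _ j]) (auto simp: z Tpow_zero intro!: bexI[of _ "\<lambda>n. 0"])
  qed
  have step: "P e" if Pe: "P (Suc e)" for e
    unfolding P_def
  proof (intro allI impI)
    fix j and g :: "nat \<Rightarrow> 'a" assume g: "g \<in> FR"
    obtain N a h where N: "N \<ge> j" and a: "a\<in>Vset l" and h: "h \<in> FR"
      and e: "(Tmap^^(N-j)) g = (\<lambda>n. (Tmap^^N) a n + of_nat l * h n)" using Dlem[OF g] by blast
    obtain N' a' where N': "N' \<ge> N" and a': "a' \<in> Vset l"
      and e': "(Tmap^^(N'-N)) (\<lambda>n. of_nat l ^ Suc e * h n) = (Tmap^^N') a'"
      using Pe h unfolding P_def by blast
    have sp: "(Tmap^^(N'-j)) g = (Tmap^^(N'-N)) ((Tmap^^(N-j)) g)" using N N' by (intro Tpow_split)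
    have cp: "(Tmap^^(N'-N)) ((Tmap^^N) a) = (Tmap^^N') a" using N' by (simp add: Tpow_comp)
    have "(Tmap^^(N'-j)) (\<lambda>n. of_nat l ^ e * g n) = (\<lambda>n. of_nat l ^ e * (Tmap^^(N'-j)) g n)"
      by (rule Tpow_scale)
    also have "\<dots> = (\<lambda>n. of_nat l ^ e * ((Tmap^^N') a n + of_nat l * (Tmap^^(N'-N)) h n))"
      unfolding sp e Tpow_add Tpow_scale cp ..
    also have "\<dots> = (\<lambda>n. (Tmap^^N') (\<lambda>n. of_nat l ^ e * a n) n + (Tmap^^(N'-N)) (\<lambda>n. of_nat l ^ Suc e * h n) n)"
      unfolding Tpow_scale by (simp add: algebra_simps)
    also have "\<dots> = (Tmap^^N') (\<lambda>n. of_nat l ^ e * a n + a' n)"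
      unfolding e' Tpow_add ..
    finally have fin: "(Tmap^^(N'-j)) (\<lambda>n. of_nat l ^ e * g n) = (Tmap^^N') (\<lambda>n. of_nat l ^ e * a n + a' n)" .
    have "(\<lambda>n. of_nat l ^ e * a n + a' n) \<in> Vset l"
    proof -
      have "{n. of_nat l ^ e * a n + a' n \<noteq> 0} \<subseteq> {n. a n \<noteq> 0} \<union> {n. a' n \<noteq> 0}" by auto
      then show ?thesis using a a' unfolding Vset_def by (auto intro: finite_subset)
    qed
    then show "\<exists>N\<ge>j. \<exists>a\<in>Vset l. (Tmap^^(N-j)) (\<lambda>n. of_nat l ^ e * g n) = (Tmap^^N) a"
      using fin N N' by (intro exI[of _ N']) auto
  qed
  have "P (\<nu> - d)" for d
  proof (induction d)
    case 0 then show ?case using base by simp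
  next
    case (Suc d)
    show ?case
    proof (cases "\<nu> - d = 0")
      case True then show ?thesis using Suc by simp
    next
      case False
      then have "\<nu> - d = Suc (\<nu> - Suc d)" by simp
      then show ?thesis using Suc step by metis
    qed
  qed
  then have "P 0" by (metis diff_self_eq_0)
  then show ?thesis using g unfolding P_def by simp
qed

lemma injlem:
  assumes a: "(a::nat\<Rightarrow>'a) \<in> Vset l" and z: "(Tmap^^m) a = (\<lambda>n. 0)"
  shows "a = (\<lambda>n. 0)"
proof (rule ccontr)
  assume "a \<noteq> (\<lambda>n. 0)"
  then obtain n0 where "a n0 \<noteq> 0" by auto
  define N where "N = (LEAST n. a n \<noteq> 0)"
  have aN: "a N \<noteq> 0" unfolding N_def using \<open>a n0 \<noteq> 0\<close> by (rule LeastI)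
  have below: "\<And>n. n < N \<Longrightarrow> a n = 0" unfolding N_def using not_less_Least by blast
  have Npos: "0 < N" and Nd: "\<not> l dvd N" using aN a by (auto simp: Vset_def)
  have low: "(\<forall>n<N. Tmap f n = 0) \<and> Tmap f N = of_nat N * f N" if "\<forall>n<N. f n = (0::'a)" for f
  proof
    show "\<forall>n<N. Tmap f n = 0" using that by (auto simp: Tmap_def)
    show "Tmap f N = of_nat N * f N" using that Npos by (simp add: Tmap_pos)
  qed
  have it: "(\<forall>n<N. (Tmap^^k) a n = 0) \<and> (Tmap^^k) a N = of_nat N ^ k * a N" for k
  proof (induction k)
    case 0 then show ?case using below by simp
  next
    case (Suc k)
    then show ?case using low[of "(Tmap^^k) a"] by simp
  qed
  have "of_nat N ^ m * a N = 0" using it[of m] z by (metis)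
  then have "uinv N ^ m * (of_nat N ^ m * a N) = 0" by simp
  moreover have "uinv N ^ m * (of_nat N ^ m * a N) = (uinv N * of_nat N) ^ m * a N"
    by (simp add: power_mult_distrib algebra_simps)
  ultimately have "a N = 0" using uinv[OF lp l0 Nd] by simp
  then show False using aN by simp
qed

end


lemma hclass_in: "f \<in> FR \<Longrightarrow> hclass k f \<in> HR"
  unfolding hclass_def HR_def by (rule quotientI) simp

lemma mem_hclass0: "((k, f) \<in> hclass 0 x) \<longleftrightarrow> ((0, x), (k, f)) \<in> colim_rel"
  by (simp add: hclass_def)

lemma rel0: "((0, x), (k, f)) \<in> colim_rel \<longleftrightarrow> x \<in> FR \<and> f \<in> FR \<and> (\<exists>m\<ge>k. (Tmap^^m) x = (Tmap^^(m-k)) f)"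
  by (auto simp: colim_rel_def)

lemma hclass_eq: "((k, f), (j, g)) \<in> colim_rel \<Longrightarrow> hclass k f = hclass j g"
  unfolding hclass_def by (rule equiv_class_eq[OF equiv_colim])

lemma hadd_hclass:
  assumes x: "x \<in> FR" and y: "y \<in> FR"
  shows "hadd (hclass 0 x) (hclass 0 y) = hclass 0 (\<lambda>n. x n + y n)"
proof -
  have each: "hclass (max k j) (\<lambda>n. (Tmap ^^ (max k j - k)) f n + (Tmap ^^ (max k j - j)) g n)
      = hclass 0 (\<lambda>n. x n + y n)"
    if kf: "(k, f) \<in> hclass 0 x" and jg: "(j, g) \<in> hclass 0 y" for k f j g
  proof -
    from kf obtain m1 where f: "f \<in> FR" and m1: "m1 \<ge> k" "(Tmap^^m1) x = (Tmap^^(m1-k)) f"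
      unfolding mem_hclass0 rel0 by blast
    from jg obtain m2 where g: "g \<in> FR" and m2: "m2 \<ge> j" "(Tmap^^m2) y = (Tmap^^(m2-j)) g"
      unfolding mem_hclass0 rel0 by blast
    define M where "M = max k j"
    define m where "m = max m1 m2"
    have fx: "(Tmap^^(m-k)) f = (Tmap^^m) x"
    proof -
      have "(Tmap^^(m-k)) f = (Tmap^^(m-m1)) ((Tmap^^(m1-k)) f)" using m1 by (intro Tpow_split) (auto simp: m_def)
      also have "\<dots> = (Tmap^^(m-m1)) ((Tmap^^m1) x)" using m1 by simp
      also have "\<dots> = (Tmap^^m) x" by (simp add: Tpow_comp m_def)
      finally show ?thesis .
    qed
    have gy: "(Tmap^^(m-j)) g = (Tmap^^m) y"
    proof -
      have "(Tmap^^(m-j)) g = (Tmap^^(m-m2)) ((Tmap^^(m2-j)) g)" using m2 by (intro Tpow_split) (auto simp: m_def)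
      also have "\<dots> = (Tmap^^(m-m2)) ((Tmap^^m2) y)" using m2 by simp
      also have "\<dots> = (Tmap^^m) y" by (simp add: Tpow_comp m_def)
      finally show ?thesis .
    qed
    have s1: "(Tmap^^(m-M)) ((Tmap ^^ (M - k)) f) = (Tmap^^(m-k)) f"
      using m1 m2 by (intro Tpow_split[symmetric]) (auto simp: m_def M_def)
    have s2: "(Tmap^^(m-M)) ((Tmap ^^ (M - j)) g) = (Tmap^^(m-j)) g"
      using m1 m2 by (intro Tpow_split[symmetric]) (auto simp: m_def M_def)
    have "(Tmap^^(m-M)) (\<lambda>n. (Tmap ^^ (M - k)) f n + (Tmap ^^ (M - j)) g n) = (Tmap^^(m-0)) (\<lambda>n. x n + y n)"
      unfolding Tpow_add s1 s2 fx gy by simp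
    moreover have "(\<lambda>n. (Tmap ^^ (M - k)) f n + (Tmap ^^ (M - j)) g n) \<in> FR"
      using f g by (intro FR_add Tpow_FR)
    moreover have "(\<lambda>n. x n + y n) \<in> FR" using x y by (rule FR_add)
    moreover have "M \<le> m" "0 \<le> m" using m1 m2 by (auto simp: m_def M_def)
    ultimately have "((M, (\<lambda>n. (Tmap ^^ (M - k)) f n + (Tmap ^^ (M - j)) g n)), (0, (\<lambda>n. x n + y n))) \<in> colim_rel"
      unfolding colim_rel_def by blast
    then show ?thesis unfolding M_def by (rule hclass_eq)
  qed
  have x0: "(0, x) \<in> hclass 0 x" using x unfolding mem_hclass0 rel0 by auto
  have y0: "(0, y) \<in> hclass 0 y" using y unfolding mem_hclass0 rel0 by auto
  have "{hclass (max k j) (\<lambda>n. (Tmap ^^ (max k j - k)) f n + (Tmap ^^ (max k j - j)) g n)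
      | k f j g. (k, f) \<in> hclass 0 x \<and> (j, g) \<in> hclass 0 y} = {hclass 0 (\<lambda>n. x n + y n)}"
  proof
    show "{hclass (max k j) (\<lambda>n. (Tmap ^^ (max k j - k)) f n + (Tmap ^^ (max k j - j)) g n)
      | k f j g. (k, f) \<in> hclass 0 x \<and> (j, g) \<in> hclass 0 y} \<subseteq> {hclass 0 (\<lambda>n. x n + y n)}"
      using each by blast
    show "{hclass 0 (\<lambda>n. x n + y n)} \<subseteq> {hclass (max k j) (\<lambda>n. (Tmap ^^ (max k j - k)) f n + (Tmap ^^ (max k j - j)) g n)
      | k f j g. (k, f) \<in> hclass 0 x \<and> (j, g) \<in> hclass 0 y}"
      using each[OF x0 y0] x0 y0 by blast
  qed
  then show ?thesis unfolding hadd_def by simp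
qed

lemma hscale_hclass:
  assumes x: "x \<in> FR"
  shows "hscale r (hclass 0 x) = hclass 0 (\<lambda>n. r * x n)"
proof -
  have each: "hclass k (\<lambda>n. r * f n) = hclass 0 (\<lambda>n. r * x n)"
    if kf: "(k, f) \<in> hclass 0 x" for k f
  proof -
    from kf obtain m1 where f: "f \<in> FR" and m1: "m1 \<ge> k" "(Tmap^^m1) x = (Tmap^^(m1-k)) f"
      unfolding mem_hclass0 rel0 by blast
    have "(Tmap^^(m1-k)) (\<lambda>n. r * f n) = (Tmap^^(m1-0)) (\<lambda>n. r * x n)"
      unfolding Tpow_scale m1(2)[symmetric] by simp
    then have "((k, (\<lambda>n. r * f n)), (0, (\<lambda>n. r * x n))) \<in> colim_rel"
      unfolding colim_rel_def using f x m1 by (auto intro: FR_scale)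
    then show ?thesis by (rule hclass_eq)
  qed
  have x0: "(0, x) \<in> hclass 0 x" using x unfolding mem_hclass0 rel0 by auto
  have "{hclass k (\<lambda>n. r * f n) | k f. (k, f) \<in> hclass 0 x} = {hclass 0 (\<lambda>n. r * x n)}"
    using each each[OF x0] x0 by blast
  then show ?thesis unfolding hscale_def by simp
qed

context
  fixes l \<nu> :: nat
  assumes lp: "prime l" and l0: "(of_nat (l ^ \<nu>) :: 'a::comm_ring_1) = 0"
begin

lemma bij_V: "bij_betw (\<lambda>a::nat\<Rightarrow>'a. hclass 0 a) (Vset l) HR"
proof (rule bij_betw_imageI)
  show "inj_on (\<lambda>a::nat\<Rightarrow>'a. hclass 0 a) (Vset l)"
  proof (rule inj_onI)
    fix a b :: "nat \<Rightarrow> 'a" assume a: "a \<in> Vset l" and b: "b \<in> Vset l" and e: "hclass 0 a = hclass 0 b"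
    have "((0, a), (0, b)) \<in> colim_rel"
      using e eq_equiv_class_iff[OF equiv_colim, of "(0,a)" "(0,b)"] Vset_FR[OF a] Vset_FR[OF b]
      unfolding hclass_def by simp
    then obtain m where "(Tmap^^m) a = (Tmap^^m) b" by (auto simp: colim_rel_def)
    then have "(Tmap^^m) (\<lambda>n. a n - b n) = (\<lambda>n. 0)" by (simp add: Tpow_diff)
    moreover have "(\<lambda>n. a n - b n) \<in> Vset l"
    proof -
      have "{n. a n - b n \<noteq> 0} \<subseteq> {n. a n \<noteq> 0} \<union> {n. b n \<noteq> 0}" by auto
      then show ?thesis using a b unfolding Vset_def by (auto intro: finite_subset)
    qed
    ultimately have "(\<lambda>n. a n - b n) = (\<lambda>n. 0)" using injlem[OF lp l0] by blast
    then show "a = b" by (simp add: fun_eq_iff)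
  qed
  show "(\<lambda>a::nat\<Rightarrow>'a. hclass 0 a) ` Vset l = HR"
  proof
    show "(\<lambda>a::nat\<Rightarrow>'a. hclass 0 a) ` Vset l \<subseteq> HR" using Vset_FR hclass_in by blast
    show "HR \<subseteq> (\<lambda>a::nat\<Rightarrow>'a. hclass 0 a) ` Vset l"
    proof
      fix X :: "(nat \<times> (nat \<Rightarrow> 'a)) set" assume "X \<in> HR"
      then obtain j g where X: "X = colim_rel `` {(j, g)}" and g: "g \<in> FR"
        unfolding HR_def by (auto elim!: quotientE)
      obtain N a where N: "N \<ge> j" and a: "a \<in> Vset l" and e: "(Tmap^^(N-j)) g = (Tmap^^N) a"
        using Qlem[OF lp l0 g] by blast
      have "((j, g), (0, a)) \<in> colim_rel" unfolding colim_rel_def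
        using N a g e Vset_FR by auto
      then have "X = hclass 0 a" unfolding X using hclass_eq[of j g 0 a] by (simp add: hclass_def)
      then show "X \<in> (\<lambda>a. hclass 0 a) ` Vset l" using a by blast
    qed
  qed
qed

end


definition Gmap :: "nat \<Rightarrow> (nat \<Rightarrow> nat \<Rightarrow> 'a::comm_ring_1) \<Rightarrow> nat \<Rightarrow> 'a" where
  "Gmap l c = (\<lambda>n. if l dvd n then 0 else c (n div l) (n mod l))"

lemma phiF_eq:
  assumes l: "0 < l"
  shows "phiF l k v n = (if k = n div l \<and> \<not> l dvd n then v (n mod l) else 0)"
proof -
  have dm: "n = l * (n div l) + n mod l" by simp
  have ml: "n mod l < l" using l by simp
  have iff: "(k * l < n \<and> n < (k + 1) * l) \<longleftrightarrow> (k = n div l \<and> \<not> l dvd n)"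
  proof
    assume a: "k * l < n \<and> n < (k + 1) * l"
    then have "n div l = k" by (intro div_nat_eqI) (auto simp: algebra_simps)
    moreover have "n mod l \<noteq> 0" using a dm \<open>n div l = k\<close> by (auto simp: algebra_simps)
    ultimately show "k = n div l \<and> \<not> l dvd n" by (auto simp: dvd_eq_mod_eq_0)
  next
    assume a: "k = n div l \<and> \<not> l dvd n"
    then have "n mod l \<noteq> 0" by (auto simp: dvd_eq_mod_eq_0)
    then have "0 < n mod l" by simp
    then have "l * (n div l) < n" "n < l * (n div l) + l" using dm ml by linarith+
    then show "k * l < n \<and> n < (k + 1) * l" using a by (auto simp: algebra_simps)
  qed
  have sub: "k = n div l \<Longrightarrow> n - k * l = n mod l" by (metis minus_div_mult_eq_mod)
  show ?thesis unfolding phiF_def using iff sub by auto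
qed

lemma sum_phiF:
  assumes l: "0 < l" and fin: "finite {k. c k \<noteq> (\<lambda>_. 0)}"
  shows "(\<lambda>n. \<Sum>k\<in>{k. c k \<noteq> (\<lambda>_. 0)}. phiF l k (c k) n) = Gmap l (c :: nat \<Rightarrow> nat \<Rightarrow> 'a::comm_ring_1)"
proof
  fix n
  have "(\<Sum>k\<in>{k. c k \<noteq> (\<lambda>_. 0)}. phiF l k (c k) n)
      = (\<Sum>k\<in>{k. c k \<noteq> (\<lambda>_. 0)}. if n div l = k then (if \<not> l dvd n then c k (n mod l) else 0) else 0)"
    by (rule sum.cong) (auto simp: phiF_eq[OF l])
  also have "\<dots> = (if n div l \<in> {k. c k \<noteq> (\<lambda>_. 0)} then (if \<not> l dvd n then c (n div l) (n mod l) else 0) else 0)"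
    using fin by (rule sum.delta')
  also have "\<dots> = Gmap l c n" by (auto simp: Gmap_def)
  finally show "(\<Sum>k\<in>{k. c k \<noteq> (\<lambda>_. 0)}. phiF l k (c k) n) = Gmap l c n" .
qed

lemma Phi_eq:
  assumes l: "0 < l" and fin: "finite {k. c k \<noteq> (\<lambda>_. 0)}"
  shows "Phi l c = hclass 0 (Gmap l c)"
  unfolding Phi_def sum_phiF[OF assms] ..

lemma bij_G:
  assumes l: "2 \<le> l"
  shows "bij_betw (Gmap l :: _ \<Rightarrow> nat \<Rightarrow> 'a::comm_ring_1) (DSum l) (Vset l)"
proof (rule bij_betw_imageI)
  have l0: "0 < l" using l by simp
  show "inj_on (Gmap l :: _ \<Rightarrow> nat \<Rightarrow> 'a) (DSum l)"
  proof (rule inj_onI)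
    fix c d :: "nat \<Rightarrow> nat \<Rightarrow> 'a" assume c: "c \<in> DSum l" and d: "d \<in> DSum l" and e: "Gmap l c = Gmap l d"
    have "c k i = d k i" for k i
    proof (cases "1 \<le> i \<and> i \<le> l - 1")
      case True
      define n where "n = k * l + i"
      have "n div l = k" "n mod l = i" using True l0 by (auto simp: n_def)
      moreover have "\<not> l dvd n" using True \<open>n mod l = i\<close> by (auto simp: dvd_eq_mod_eq_0)
      ultimately show ?thesis using fun_cong[OF e, of n] by (simp add: Gmap_def)
    next
      case False
      have "c k \<in> Lmod l" "d k \<in> Lmod l" using c d by (auto simp: DSum_def)
      then have "c k i = 0" "d k i = 0" using False unfolding Lmod_def by blast+
      then show ?thesis by simp
    qed
    then show "c = d" by (auto simp: fun_eq_iff)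
  qed
  show "(Gmap l :: _ \<Rightarrow> nat \<Rightarrow> 'a) ` DSum l = Vset l"
  proof
    show "(Gmap l :: _ \<Rightarrow> nat \<Rightarrow> 'a) ` DSum l \<subseteq> Vset l"
    proof
      fix a assume "a \<in> (Gmap l :: _ \<Rightarrow> nat \<Rightarrow> 'a) ` DSum l"
      then obtain c where c: "c \<in> DSum l" and a: "a = Gmap l c" by blast
      have "finite {k. c k \<noteq> (\<lambda>_. 0)}" using c by (simp add: DSum_def)
      then obtain B where B: "\<And>k. c k \<noteq> (\<lambda>_. 0) \<Longrightarrow> k < B" by (auto simp: finite_nat_set_iff_bounded)
      have "{n. a n \<noteq> 0} \<subseteq> {..<B * l}"
      proof
        fix n assume "n \<in> {n. a n \<noteq> 0}"
        then have "c (n div l) \<noteq> (\<lambda>_. 0)" by (auto simp: a Gmap_def split: if_splits)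
        then have "n div l < B" by (rule B)
        then have "n < B * l" using l0 by (metis div_less_iff_less_mult)
        then show "n \<in> {..<B * l}" by simp
      qed
      then have "finite {n. a n \<noteq> 0}" by (rule finite_subset) simp
      moreover have "\<forall>n. a n \<noteq> 0 \<longrightarrow> 0 < n \<and> \<not> l dvd n"
      proof (intro allI impI)
        fix n assume "a n \<noteq> 0"
        then have nd: "\<not> l dvd n" by (simp add: a Gmap_def split: if_splits)
        then have "n \<noteq> 0" by (metis dvd_0_right)
        with nd show "0 < n \<and> \<not> l dvd n" by simp
      qed
      ultimately show "a \<in> Vset l" by (simp add: Vset_def)
    qed
    show "Vset l \<subseteq> (Gmap l :: _ \<Rightarrow> nat \<Rightarrow> 'a) ` DSum l"
    proof
      fix a :: "nat \<Rightarrow> 'a" assume a: "a \<in> Vset l"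
      define c where "c = (\<lambda>k i. if 1 \<le> i \<and> i \<le> l - 1 then a (k * l + i) else 0)"
      have "{k. c k \<noteq> (\<lambda>_. 0)} \<subseteq> (\<lambda>n. n div l) ` {n. a n \<noteq> 0}"
      proof
        fix k assume "k \<in> {k. c k \<noteq> (\<lambda>_. 0)}"
        then obtain i where i: "1 \<le> i" "i \<le> l - 1" "a (k * l + i) \<noteq> 0"
          by (auto simp: c_def fun_eq_iff split: if_splits)
        have "(k * l + i) div l = k" using i l0 by simp
        then show "k \<in> (\<lambda>n. n div l) ` {n. a n \<noteq> 0}" using i(3) by (metis (mono_tags) image_eqI mem_Collect_eq)
      qed
      moreover have "finite {n. a n \<noteq> 0}" using a by (simp add: Vset_def)
      ultimately have "finite {k. c k \<noteq> (\<lambda>_. 0)}" by (meson finite_imageI finite_subset)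
      moreover have "\<forall>k. c k \<in> Lmod l" by (auto simp: c_def Lmod_def)
      ultimately have cD: "c \<in> DSum l" by (simp add: DSum_def)
      have "Gmap l c = a"
      proof
        fix n
        show "Gmap l c n = a n"
        proof (cases "l dvd n")
          case True then show ?thesis using a by (auto simp: Gmap_def Vset_def)
        next
          case False
          then have "n mod l \<noteq> 0" by (simp add: dvd_eq_mod_eq_0)
          moreover have "n mod l < l" using l0 by simp
          ultimately have "1 \<le> n mod l" "n mod l \<le> l - 1" by arith+
          moreover have "n div l * l + n mod l = n" by simp
          ultimately show ?thesis using False by (simp add: Gmap_def c_def)
        qed
      qed
      then show "a \<in> (Gmap l :: _ \<Rightarrow> nat \<Rightarrow> 'a) ` DSum l" using cD by blast
    qed
  qed
qed

theorem theorem2p5: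
  fixes l \<nu> :: nat
  assumes "prime l" and "\<nu> \<ge> 1"
    and "(of_nat (l ^ \<nu>) :: 'a::comm_ring_1) = 0"
  shows "bij_betw (Phi l :: (nat \<Rightarrow> nat \<Rightarrow> 'a) \<Rightarrow> _) (DSum l) HR
       \<and> (\<forall>c::nat \<Rightarrow> nat \<Rightarrow> 'a\<in>DSum l. \<forall>d\<in>DSum l. Phi l (\<lambda>k i. c k i + d k i) = hadd (Phi l c) (Phi l d))
       \<and> (\<forall>c::nat \<Rightarrow> nat \<Rightarrow> 'a\<in>DSum l. \<forall>r::'a. Phi l (\<lambda>k i. r * c k i) = hscale r (Phi l c))
       \<and> bij_betw (\<lambda>a::nat \<Rightarrow> 'a. hclass 0 a)
           {a. finite {n. a n \<noteq> 0} \<and> (\<forall>n. a n \<noteq> 0 \<longrightarrow> 0 < n \<and> \<not> l dvd n)} HR"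
proof -
  have l2: "2 \<le> l" using assms(1) by (simp add: prime_ge_2_nat)
  then have lpos: "0 < l" by simp
  have bV: "bij_betw (\<lambda>a::nat\<Rightarrow>'a. hclass 0 a) (Vset l) HR" by (rule bij_V[OF assms(1) assms(3)])
  have finD: "finite {k. c k \<noteq> (\<lambda>_. 0)}" if "c \<in> DSum l" for c :: "nat \<Rightarrow> nat \<Rightarrow> 'a"
    using that by (simp add: DSum_def)
  have GV: "Gmap l c \<in> Vset l" if "c \<in> DSum l" for c :: "nat \<Rightarrow> nat \<Rightarrow> 'a"
    using bij_G[OF l2] that by (auto simp: bij_betw_def)
  have b1: "bij_betw (Phi l :: (nat \<Rightarrow> nat \<Rightarrow> 'a) \<Rightarrow> _) (DSum l) HR"
  proof -
    have "bij_betw ((\<lambda>a::nat\<Rightarrow>'a. hclass 0 a) \<circ> Gmap l) (DSum l) HR"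
      using bij_G[OF l2] bV by (rule bij_betw_trans)
    moreover have "\<And>c. c \<in> DSum l \<Longrightarrow> ((\<lambda>a::nat\<Rightarrow>'a. hclass 0 a) \<circ> Gmap l) c = Phi l c"
      using Phi_eq[OF lpos finD] by simp
    ultimately show ?thesis using bij_betw_cong by blast
  qed
  have b2: "Phi l (\<lambda>k i. c k i + d k i) = hadd (Phi l c) (Phi l d)"
    if c: "c \<in> DSum l" and d: "d \<in> DSum l" for c d :: "nat \<Rightarrow> nat \<Rightarrow> 'a"
  proof -
    have "{k. (\<lambda>i. c k i + d k i) \<noteq> (\<lambda>_. 0)} \<subseteq> {k. c k \<noteq> (\<lambda>_. 0)} \<union> {k. d k \<noteq> (\<lambda>_. 0)}"
      by auto
    then have fin: "finite {k. (\<lambda>i. c k i + d k i) \<noteq> (\<lambda>_. 0)}"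
      using finD[OF c] finD[OF d] by (auto intro: finite_subset)
    have "Phi l (\<lambda>k i. c k i + d k i) = hclass 0 (Gmap l (\<lambda>k i. c k i + d k i))"
      using Phi_eq[OF lpos, of "\<lambda>k i. c k i + d k i"] fin by simp
    also have "Gmap l (\<lambda>k i. c k i + d k i) = (\<lambda>n. Gmap l c n + Gmap l d n)"
      by (auto simp: Gmap_def fun_eq_iff)
    also have "hclass 0 \<dots> = hadd (hclass 0 (Gmap l c)) (hclass 0 (Gmap l d))"
      using GV[OF c] GV[OF d] Vset_FR by (intro hadd_hclass[symmetric]) auto
    finally show ?thesis using Phi_eq[OF lpos finD[OF c]] Phi_eq[OF lpos finD[OF d]] by simp
  qed
  have b3: "Phi l (\<lambda>k i. r * c k i) = hscale r (Phi l c)"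
    if c: "c \<in> DSum l" for c :: "nat \<Rightarrow> nat \<Rightarrow> 'a" and r
  proof -
    have "{k. (\<lambda>i. r * c k i) \<noteq> (\<lambda>_. 0)} \<subseteq> {k. c k \<noteq> (\<lambda>_. 0)}" by auto
    then have fin: "finite {k. (\<lambda>i. r * c k i) \<noteq> (\<lambda>_. 0)}"
      using finD[OF c] by (auto intro: finite_subset)
    have "Phi l (\<lambda>k i. r * c k i) = hclass 0 (Gmap l (\<lambda>k i. r * c k i))"
      using Phi_eq[OF lpos, of "\<lambda>k i. r * c k i"] fin by simp
    also have "Gmap l (\<lambda>k i. r * c k i) = (\<lambda>n. r * Gmap l c n)"
      by (auto simp: Gmap_def fun_eq_iff)
    also have "hclass 0 \<dots> = hscale r (hclass 0 (Gmap l c))"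
      using GV[OF c] Vset_FR by (intro hscale_hclass[symmetric]) auto
    finally show ?thesis using Phi_eq[OF lpos finD[OF c]] by simp
  qed
  have b4: "bij_betw (\<lambda>a::nat \<Rightarrow> 'a. hclass 0 a)
           {a. finite {n. a n \<noteq> 0} \<and> (\<forall>n. a n \<noteq> 0 \<longrightarrow> 0 < n \<and> \<not> l dvd n)} HR"
    using bV by (simp add: Vset_def)
  show ?thesis using b1 b2 b3 b4 by blast
qed


end
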